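(* Let $\theta>0$ and $h>0$, and let $\mu=\frac12(\delta_{-1}+\delta_{+1})$ on $\{-1,+1\}$. For a function $q:[0,2\pi)\times\{-1,+1\}\to\mathbb{R}$ define $r_q\ge 0$ and $\Psi_q\in[0,2\pi)$ by \[ r_q e^{i\Psi_q}=\int_{\{-1,+1\}}\int_0^{2\pi} e^{ix}\,q(x,\eta)\,dx\,\mu(d\eta), \] and the operator $L_q$ acting on $f:[0,2\pi)\times\{-1,+1\}\to\mathbb{R}$ by \[ L_q f(x,\eta)=\frac12\frac{\partial^2 f}{\partial x^2}(x,\eta)-\frac{\partial}{\partial x}\Big\{\big[\theta r_q\sin(\Psi_q-x)-h\eta\sin x\big]f(x,\eta)\Big\}. \] Let $q:[0,2\pi)\times\{-1,+1\}\to\mathbb{R}$ be such that $q(x,\cdot)$ is measurable and $q(\cdot,\eta)$ is a probability density on $[0,2\pi)$ (the circle, with periodic boundary conditions). Then $q$ is a stationary solution of the McKean–Vlasov equation $\partial_t q_t=L_{q_t}q_t$, i.e. $L_q q\equiv 0$, if and only if it is of the form \[ q(x,\eta)=[Z(\eta)]^{-1}\exp\{2\theta r\cos(\Psi-x)+2h\eta\cos x\}, \] where $Z(\eta)$ is a normalizing factor and $(r,\Psi)$ satisfies the self-consistency relation \[ r e^{i\Psi}=\int_{\{-1,+1\}}\int_0^{2\pi}e^{ix}\,q(x,\eta)\,dx\,\mu(d\eta). \]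
   Context: The torus $[0,2\pi)$ is identified with the circle; functions on it are $2\pi$-periodic. $\mu$ is the law of the dichotomic random field $\eta$, uniform on $\{-1,+1\}$; $\theta>0$ is the coupling strength and $h>0$ the field intensity. *)

theory Defs
  imports "HOL-Analysis.Analysis"
begin

(* Functions on the torus [0,2pi) x {-1,+1} are represented as
   q :: real => real => real, q x eta, 2pi-periodic in x; eta ranges over {-1,1}. *)

definition mu_int :: "(real \<Rightarrow> 'a::real_vector) \<Rightarrow> 'a" where
  "mu_int F = (1/2) *\<^sub>R (F (-1) + F 1)"

definition order_param :: "(real \<Rightarrow> real \<Rightarrow> real) \<Rightarrow> complex" where
  "order_param q = mu_int (\<lambda>\<eta>. integral {0..2*pi} (\<lambda>x. exp (\<i> * complex_of_real x) * complex_of_real (q x \<eta>)))"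

definition r_of :: "(real \<Rightarrow> real \<Rightarrow> real) \<Rightarrow> real" where
  "r_of q = cmod (order_param q)"

text \<open>Psi_q in [0,2pi) with r_q e^{i Psi_q} = order_param q (Psi_q = 0 if order_param q = 0).\<close>
definition Psi_of :: "(real \<Rightarrow> real \<Rightarrow> real) \<Rightarrow> real" where
  "Psi_of q = (if Arg (order_param q) < 0 then Arg (order_param q) + 2*pi else Arg (order_param q))"

definition L_op :: "real \<Rightarrow> real \<Rightarrow> (real \<Rightarrow> real \<Rightarrow> real) \<Rightarrow> (real \<Rightarrow> real \<Rightarrow> real) \<Rightarrow> real \<Rightarrow> real \<Rightarrow> real" where
  "L_op \<theta> h q f x \<eta> =
     (1/2) * deriv (deriv (\<lambda>y. f y \<eta>)) x
     - deriv (\<lambda>y. (\<theta> * r_of q * sin (Psi_of q - y) - h * \<eta> * sin y) * f y \<eta>) x"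

end

theory Submission
  imports Defs
begin
lemma stat_forward:
  fixes g F F' U :: "real \<Rightarrow> real"
  assumes dU: "\<And>x. (U has_real_derivative 2 * F x) (at x)"
    and dF: "\<And>x. (F has_real_derivative F' x) (at x)"
    and pU: "\<And>x. U (x+2*pi) = U x" and pg: "\<And>x. g (x+2*pi) = g x"
    and dg1: "\<And>x. g differentiable at x" and dg2: "\<And>x. deriv g differentiable at x"
    and L: "\<And>x. (1/2) * deriv (deriv g) x - deriv (\<lambda>y. F y * g y) x = 0"
  shows "\<exists>K. \<forall>x. g x = K * exp (U x)"
proof -
  have dg: "(g has_real_derivative deriv g x) (at x)" for x
    using dg1 DERIV_deriv_iff_real_differentiable by blast
  have ddg: "(deriv g has_real_derivative deriv (deriv g) x) (at x)" for x
    using dg2 DERIV_deriv_iff_real_differentiable by blast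
  have dFg0: "((\<lambda>y. F y * g y) has_real_derivative F' x * g x + F x * deriv g x) (at x)" for x
    by (auto intro!: derivative_eq_intros dF dg)
  have dFg: "deriv (\<lambda>y. F y * g y) x = F' x * g x + F x * deriv g x" for x
    using dFg0 DERIV_imp_deriv by blast
  define G where "G = (\<lambda>y. 1/2 * deriv g y - F y * g y)"
  have dG: "(G has_real_derivative 0) (at x)" for x
  proof -
    have "(G has_real_derivative 1/2 * deriv (deriv g) x - (F' x * g x + F x * deriv g x)) (at x)"
      unfolding G_def by (intro DERIV_diff DERIV_cmult ddg dFg0)
    moreover have "1/2 * deriv (deriv g) x - (F' x * g x + F x * deriv g x) = 0"
      using L[of x] dFg[of x] by simp
    ultimately show ?thesis by (metis (no_types))
  qed
  define c where "c = G 0"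
  have Gc: "G x = c" for x unfolding c_def using dG DERIV_isconst_all by blast
  have dg': "deriv g x = 2 * F x * g x + 2 * c" for x
    using Gc[of x] unfolding G_def by simp
  define W where "W = (\<lambda>y. g y * exp (- U y))"
  have dW: "(W has_real_derivative 2 * c * exp (- U x)) (at x)" for x
  proof -
    have "(W has_real_derivative deriv g x * exp (- U x) + g x * (exp (- U x) * (- (2 * F x)))) (at x)"
      unfolding W_def by (auto intro!: derivative_eq_intros dg dU)
    moreover have "deriv g x * exp (- U x) + g x * (exp (- U x) * (- (2 * F x))) = 2 * c * exp (- U x)"
      using dg'[of x] by (simp add: algebra_simps)
    ultimately show ?thesis by simp
  qed
  obtain z where "W (2*pi) - W 0 = (2*pi - 0) * (2 * c * exp (- U z))"
    using MVT2[of 0 "2*pi" W "\<lambda>x. 2 * c * exp (- U x)"] dW by auto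
  moreover have "W (2*pi) = W 0" unfolding W_def using pg[of 0] pU[of 0] by simp
  ultimately have "c = 0" by simp
  then have "(W has_real_derivative 0) (at x)" for x using dW[of x] by simp
  then have "W x = W 0" for x using DERIV_isconst_all by blast
  then have "g x = W 0 * exp (U x)" for x unfolding W_def
    by (metis exp_minus_inverse mult.assoc mult.commute mult_1)
  then show ?thesis by blast
qed

lemma stat_backward:
  fixes F F' V :: "real \<Rightarrow> real" and Z :: real
  assumes dV: "\<And>x. (V has_real_derivative 2 * F x) (at x)"
    and dF: "\<And>x. (F has_real_derivative F' x) (at x)"
  shows "(1/2) * deriv (deriv (\<lambda>y. exp (V y) / Z)) x - deriv (\<lambda>y. F y * (exp (V y) / Z)) x = 0"
proof -
  define g where "g = (\<lambda>y. exp (V y) / Z)"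
  have dg: "(g has_real_derivative 2 * F y * g y) (at y)" for y
  proof -
    have "((\<lambda>y. exp (V y) * (1/Z)) has_real_derivative (exp (V y) * (2 * F y)) * (1/Z)) (at y)"
      by (intro DERIV_cmult_right DERIV_fun_exp dV)
    then show ?thesis unfolding g_def by (simp add: algebra_simps)
  qed
  have dg': "deriv g = (\<lambda>y. 2 * (F y * g y))"
  proof
    fix y show "deriv g y = 2 * (F y * g y)" using DERIV_imp_deriv[OF dg[of y]] by simp
  qed
  have dFg: "((\<lambda>y. F y * g y) has_real_derivative F' x * g x + F x * (2 * F x * g x)) (at x)"
    using DERIV_mult[OF dF dg] by (simp add: algebra_simps)
  have "deriv (deriv g) x = 2 * (F' x * g x + F x * (2 * F x * g x))"
    unfolding dg' using DERIV_cmult[OF dFg, of 2] DERIV_imp_deriv by blast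
  moreover have "deriv (\<lambda>y. F y * g y) x = F' x * g x + F x * (2 * F x * g x)"
    using dFg DERIV_imp_deriv by blast
  ultimately show ?thesis unfolding g_def by simp
qed

lemma Psi_prop: "complex_of_real (r_of q) * exp (\<i> * complex_of_real (Psi_of q)) = order_param q"
  and Psi_range: "Psi_of q \<in> {0..<2*pi}"
proof -
  have b: "- pi < Arg (order_param q)" "Arg (order_param q) \<le> pi" using Arg_bounded by auto
  then show "Psi_of q \<in> {0..<2*pi}" unfolding Psi_of_def using pi_gt_zero by auto
  show "complex_of_real (r_of q) * exp (\<i> * complex_of_real (Psi_of q)) = order_param q"
  proof (cases "order_param q = 0")
    case True then show ?thesis by (simp add: r_of_def)
  next
    case False
    have e: "exp (\<i> * complex_of_real (Psi_of q)) = exp (\<i> * complex_of_real (Arg (order_param q)))"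
    proof -
      have "exp (\<i> * (2 * complex_of_real pi)) = 1"
        using exp_two_pi_i by (simp add: mult.commute)
      then show ?thesis unfolding Psi_of_def by (simp add: distrib_left exp_add)
    qed
    show ?thesis unfolding e r_of_def using Arg_eq[OF False] by simp
  qed
qed

theorem proposition1:
  fixes \<theta> h :: real and q :: "real \<Rightarrow> real \<Rightarrow> real"
  assumes "\<theta> > 0" and "h > 0"
    and periodic: "\<forall>\<eta>\<in>{-1,1}. \<forall>x. q (x + 2*pi) \<eta> = q x \<eta>"
    and smooth: "\<forall>\<eta>\<in>{-1,1}. \<forall>x. (\<lambda>y. q y \<eta>) differentiable (at x)
                   \<and> deriv (\<lambda>y. q y \<eta>) differentiable (at x)"
    and density: "\<forall>\<eta>\<in>{-1,1}. (\<forall>x. q x \<eta> \<ge> 0) \<and> (\<lambda>x. q x \<eta>) integrable_on {0..2*pi}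
                   \<and> integral {0..2*pi} (\<lambda>x. q x \<eta>) = 1"
  shows "(\<forall>\<eta>\<in>{-1,1}. \<forall>x. L_op \<theta> h q q x \<eta> = 0) \<longleftrightarrow>
         (\<exists>r \<Psi>. r \<ge> 0 \<and> \<Psi> \<in> {0..<2*pi} \<and>
            (\<forall>\<eta>\<in>{-1,1}. \<forall>x. q x \<eta> =
                exp (2*\<theta>*r* cos (\<Psi> - x) + 2*h*\<eta>* cos x)
                / integral {0..2*pi} (\<lambda>y. exp (2*\<theta>*r* cos (\<Psi> - y) + 2*h*\<eta>* cos y))) \<and>
            complex_of_real r * exp (\<i> * complex_of_real \<Psi>) = order_param q)"
proof -
  define z where "z = order_param q"
  define r0 where "r0 = r_of q"
  define P0 where "P0 = Psi_of q"
  have zP: "complex_of_real r0 * exp (\<i> * complex_of_real P0) = z"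
    unfolding r0_def P0_def z_def by (rule Psi_prop)
  have r0nn: "r0 \<ge> 0" unfolding r0_def r_of_def by simp
  show ?thesis
  proof
    assume L: "\<forall>\<eta>\<in>{-1,1}. \<forall>x. L_op \<theta> h q q x \<eta> = 0"
    have main: "q x \<eta> = exp (2*\<theta>*r0* cos (P0 - x) + 2*h*\<eta>* cos x)
                / integral {0..2*pi} (\<lambda>y. exp (2*\<theta>*r0* cos (P0 - y) + 2*h*\<eta>* cos y))"
      if e: "\<eta> \<in> {-1,1}" for \<eta> x
    proof -
      define U where "U = (\<lambda>y. 2*\<theta>*r0* cos (P0 - y) + 2*h*\<eta>* cos y)"
      have "\<exists>K. \<forall>x. q x \<eta> = K * exp (U x)"
      proof (rule stat_forward[where F="\<lambda>y. \<theta>*r0* sin (P0 - y) - h*\<eta>* sin y"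
               and F'="\<lambda>y. - \<theta>*r0* cos (P0 - y) - h*\<eta>* cos y"])
        show "(U has_real_derivative 2 * (\<theta>*r0* sin (P0 - y) - h*\<eta>* sin y)) (at y)" for y
          unfolding U_def by (auto intro!: derivative_eq_intros simp: algebra_simps)
        show "((\<lambda>y. \<theta>*r0* sin (P0 - y) - h*\<eta>* sin y) has_real_derivative
               - \<theta>*r0* cos (P0 - y) - h*\<eta>* cos y) (at y)" for y
          by (auto intro!: derivative_eq_intros simp: algebra_simps)
        show "U (y + 2*pi) = U y" for y
        proof -
          have "cos (P0 - (y + 2*pi)) = cos (P0 - y)"
            using cos_periodic[of "P0 - (y + 2*pi)"] by (simp add: algebra_simps)
          then show ?thesis unfolding U_def by (simp add: cos_periodic)
        qed
        show "q (y + 2*pi) \<eta> = q y \<eta>" for y using periodic e by blast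
        show "(\<lambda>y. q y \<eta>) differentiable at y" for y using smooth e by blast
        show "deriv (\<lambda>y. q y \<eta>) differentiable at y" for y using smooth e by blast
        show "1/2 * deriv (deriv (\<lambda>y. q y \<eta>)) y -
              deriv (\<lambda>y. (\<theta>*r0* sin (P0 - y) - h*\<eta>* sin y) * q y \<eta>) y = 0" for y
          using L e unfolding L_op_def r0_def P0_def by blast
      qed
      then obtain K where K: "\<And>x. q x \<eta> = K * exp (U x)" by blast
      have "1 = integral {0..2*pi} (\<lambda>x. q x \<eta>)" using density e by auto
      also have "\<dots> = K * integral {0..2*pi} (\<lambda>x. exp (U x))"
        unfolding K by simp
      finally have KZ: "K * integral {0..2*pi} (\<lambda>x. exp (U x)) = 1" by simp
      then have "K = 1 / integral {0..2*pi} (\<lambda>x. exp (U x))"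
        by (metis nonzero_eq_divide_eq mult_zero_right zero_neq_one mult.commute)
      then show ?thesis using K[of x] unfolding U_def by simp
    qed
    show "\<exists>r \<Psi>. r \<ge> 0 \<and> \<Psi> \<in> {0..<2*pi} \<and>
            (\<forall>\<eta>\<in>{-1,1}. \<forall>x. q x \<eta> =
                exp (2*\<theta>*r* cos (\<Psi> - x) + 2*h*\<eta>* cos x)
                / integral {0..2*pi} (\<lambda>y. exp (2*\<theta>*r* cos (\<Psi> - y) + 2*h*\<eta>* cos y))) \<and>
            complex_of_real r * exp (\<i> * complex_of_real \<Psi>) = order_param q"
      using r0nn Psi_range[of q] main zP unfolding P0_def z_def by blast
  next
    assume "\<exists>r \<Psi>. r \<ge> 0 \<and> \<Psi> \<in> {0..<2*pi} \<and>
            (\<forall>\<eta>\<in>{-1,1}. \<forall>x. q x \<eta> =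
                exp (2*\<theta>*r* cos (\<Psi> - x) + 2*h*\<eta>* cos x)
                / integral {0..2*pi} (\<lambda>y. exp (2*\<theta>*r* cos (\<Psi> - y) + 2*h*\<eta>* cos y))) \<and>
            complex_of_real r * exp (\<i> * complex_of_real \<Psi>) = order_param q"
    then obtain r \<Psi> where rnn: "r \<ge> 0" and qf: "\<forall>\<eta>\<in>{-1,1}. \<forall>x. q x \<eta> =
                exp (2*\<theta>*r* cos (\<Psi> - x) + 2*h*\<eta>* cos x)
                / integral {0..2*pi} (\<lambda>y. exp (2*\<theta>*r* cos (\<Psi> - y) + 2*h*\<eta>* cos y))"
      and rP: "complex_of_real r * exp (\<i> * complex_of_real \<Psi>) = z"
      unfolding z_def by blast
    have "cmod z = r" using rP[symmetric] rnn by (simp add: norm_mult)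
    moreover have "cmod z = r0" using zP[symmetric] r0nn by (simp add: norm_mult)
    ultimately have rr: "r0 = r" by simp
    have sinEq: "\<theta>*r0* sin (P0 - y) = \<theta>*r* sin (\<Psi> - y)" for y
    proof (cases "r = 0")
      case True then show ?thesis using rr by simp
    next
      case False
      have "complex_of_real r * exp (\<i> * complex_of_real \<Psi>) = complex_of_real r * exp (\<i> * complex_of_real P0)"
        using rP zP rr by simp
      then have ee: "exp (\<i> * complex_of_real \<Psi>) = exp (\<i> * complex_of_real P0)"
        using False by simp
      have "cos \<Psi> = cos P0" using arg_cong[OF ee, of Re] by (simp add: Re_exp)
      moreover have "sin \<Psi> = sin P0" using arg_cong[OF ee, of Im] by (simp add: Im_exp)
      ultimately show ?thesis using rr by (simp add: sin_diff)
    qed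
    show "\<forall>\<eta>\<in>{-1,1}. \<forall>x. L_op \<theta> h q q x \<eta> = 0"
    proof (intro ballI allI)
      fix \<eta> x assume e: "\<eta> \<in> {-1::real,1}"
      define Z where "Z = integral {0..2*pi} (\<lambda>y. exp (2*\<theta>*r* cos (\<Psi> - y) + 2*h*\<eta>* cos y))"
      define V where "V = (\<lambda>y. 2*\<theta>*r* cos (\<Psi> - y) + 2*h*\<eta>* cos y)"
      have qe: "(\<lambda>y. q y \<eta>) = (\<lambda>y. exp (V y) / Z)"
        using qf e unfolding V_def Z_def by auto
      have Fe: "(\<lambda>y. (\<theta> * r_of q * sin (Psi_of q - y) - h * \<eta> * sin y) * q y \<eta>)
              = (\<lambda>y. (\<theta>*r* sin (\<Psi> - y) - h*\<eta>* sin y) * (exp (V y) / Z))"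
        using sinEq qe unfolding r0_def P0_def by (metis)
      show "L_op \<theta> h q q x \<eta> = 0"
        unfolding L_op_def qe Fe
      proof (rule stat_backward[where F'="\<lambda>y. - \<theta>*r* cos (\<Psi> - y) - h*\<eta>* cos y"])
        show "(V has_real_derivative 2 * (\<theta>*r* sin (\<Psi> - y) - h*\<eta>* sin y)) (at y)" for y
          unfolding V_def by (auto intro!: derivative_eq_intros simp: algebra_simps)
        show "((\<lambda>y. \<theta>*r* sin (\<Psi> - y) - h*\<eta>* sin y) has_real_derivative
               - \<theta>*r* cos (\<Psi> - y) - h*\<eta>* cos y) (at y)" for y
          by (auto intro!: derivative_eq_intros simp: algebra_simps)
      qed
    qed
  qed
qed

end
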